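(* Let $(\mathbf{P}_t)_{t\ge0}$ be a continuous-time Markov process on a countable state space $\mathcal{S}$ with stable conservative $Q$-matrix, and suppose it is reversible with respect to a positive measure $\mu$ on $\mathcal{S}$ (i.e. $\mu_ip_{ij}(t)=\mu_jp_{ji}(t)$ for all $i,j,t$). Then it is initial-state identifiable: for every $t\in[0,\infty)$, the rows $\mathbf{p}^i(t)$, $i\in\mathcal{S}$, of $\mathbf{P}_t$ are pairwise distinct.
   Context: $\mathbf{P}_t=(p_{ij}(t))$ is the transition matrix at time $t$ and $\mathbf{p}^i(t)=(p_{i1}(t),p_{i2}(t),\dots)$ its $i$-th row. Stable conservative $Q$-matrix: $q_{ij}=p'_{ij}(0)\in[0,\infty)$ for $i\ne j$ and $q_i=-q_{ii}=\sum_{j\ne i}q_{ij}<\infty$. *)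

theory Defs
  imports "HOL-Analysis.Analysis"
begin

definition transition_function :: "(real \<Rightarrow> 'a::countable \<Rightarrow> 'a \<Rightarrow> real) \<Rightarrow> bool" where
  "transition_function P \<longleftrightarrow>
     (\<forall>t\<ge>0. \<forall>i j. P t i j \<ge> 0) \<and>
     (\<forall>t\<ge>0. \<forall>i. ((\<lambda>j. P t i j) has_sum 1) UNIV) \<and>
     (\<forall>i j. P 0 i j = (if i = j then 1 else 0)) \<and>
     (\<forall>s\<ge>0. \<forall>t\<ge>0. \<forall>i j. ((\<lambda>k. P s i k * P t k j) has_sum P (s + t) i j) UNIV)"

definition stable_conservative_Q :: "(real \<Rightarrow> 'a::countable \<Rightarrow> 'a \<Rightarrow> real) \<Rightarrow> bool" where
  "stable_conservative_Q P \<longleftrightarrow>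
     (\<exists>Q :: 'a \<Rightarrow> 'a \<Rightarrow> real.
        (\<forall>i j. ((\<lambda>t. P t i j) has_real_derivative Q i j) (at_right 0)) \<and>
        (\<forall>i. ((\<lambda>j. if j = i then 0 else Q i j) has_sum (- Q i i)) UNIV))"

definition reversible_wrt :: "(real \<Rightarrow> 'a \<Rightarrow> 'a \<Rightarrow> real) \<Rightarrow> ('a \<Rightarrow> real) \<Rightarrow> bool" where
  "reversible_wrt P \<mu> \<longleftrightarrow> (\<forall>t\<ge>0. \<forall>i j. \<mu> i * P t i j = \<mu> j * P t j i)"

end

theory Submission
  imports Defs
begin

lemma halve:
  fixes P :: "real \<Rightarrow> 'a::countable \<Rightarrow> 'a \<Rightarrow> real" and \<mu> :: "'a \<Rightarrow> real"
  assumes TF: "transition_function P"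
    and pos: "\<forall>i. \<mu> i > 0"
    and rev: "reversible_wrt P \<mu>"
    and s: "s \<ge> 0"
    and eq: "\<forall>k. P (s + s) i k = P (s + s) j k"
  shows "\<forall>k. P s i k = P s j k"
proof -
  have CK: "\<And>a b. ((\<lambda>k. P s a k * P s k b) has_sum P (s+s) a b) UNIV"
    using TF s unfolding transition_function_def by blast
  have R: "\<And>a b. P s b a = \<mu> a * P s a b / \<mu> b"
    using rev s pos unfolding reversible_wrt_def
    by (metis nonzero_mult_div_cancel_left order_less_irrefl)
  have R2: "\<mu> i * P (s+s) i j = \<mu> j * P (s+s) j i"
    using rev s unfolding reversible_wrt_def by simp
  define f where "f k = (P s i k - P s j k)^2 / \<mu> k" for k
  have feq: "f k = (1/\<mu> i) * (P s i k * P s k i) + (- (2/\<mu> j) * (P s i k * P s k j))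
      + (1/\<mu> j) * (P s j k * P s k j)" for k
  proof -
    have a: "\<mu> i > 0" "\<mu> j > 0" "\<mu> k > 0" using pos by auto
    show ?thesis unfolding f_def R[of i k] R[of j k]
      using a by (simp add: field_simps power2_eq_square)
  qed
  have hs: "(f has_sum ((1/\<mu> i) * P (s+s) i i + (- (2/\<mu> j) * P (s+s) i j) + (1/\<mu> j) * P (s+s) j j)) UNIV"
    unfolding feq[abs_def]
    by (intro has_sum_add has_sum_cmult_right CK)
  have "(1/\<mu> i) * P (s+s) i i + (- (2/\<mu> j) * P (s+s) i j) + (1/\<mu> j) * P (s+s) j j = 0"
  proof -
    have a: "\<mu> i > 0" "\<mu> j > 0" using pos by auto
    have "P (s+s) i i = P (s+s) j i" "P (s+s) j j = P (s+s) i j" using eq by auto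
    then show ?thesis using R2 a by (simp add: field_simps)
  qed
  with hs have hs0: "(f has_sum 0) UNIV" by simp
  have fnn: "f k \<ge> 0" for k unfolding f_def using pos by (simp add: less_imp_le)
  show ?thesis
  proof
    fix k
    have "f k \<le> 0"
      using has_sum_mono_neutral[OF has_sum_finite[of "{k}" f] hs0, of ] fnn by auto
    then have "f k = 0" using fnn[of k] by simp
    then show "P s i k = P s j k" unfolding f_def using pos[rule_format, of k] by simp
  qed
qed

theorem mainTheorem11:
  fixes P :: "real \<Rightarrow> 'a::countable \<Rightarrow> 'a \<Rightarrow> real" and \<mu> :: "'a \<Rightarrow> real"
  assumes "transition_function P"
    and "stable_conservative_Q P"
    and "\<forall>i. \<mu> i > 0"
    and "reversible_wrt P \<mu>"
  shows "\<forall>t\<ge>0. \<forall>i j. i \<noteq> j \<longrightarrow> (\<lambda>k. P t i k) \<noteq> (\<lambda>k. P t j k)"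
proof (intro allI impI)
  fix t :: real and i j :: 'a
  assume t: "t \<ge> 0" and ij: "i \<noteq> j"
  have P0: "\<And>a b. P 0 a b = (if a = b then 1 else 0)"
    using assms(1) unfolding transition_function_def by blast
  show "(\<lambda>k. P t i k) \<noteq> (\<lambda>k. P t j k)"
  proof
    assume E: "(\<lambda>k. P t i k) = (\<lambda>k. P t j k)"
    have all: "\<forall>k. P (t / 2^n) i k = P (t / 2^n) j k" for n
    proof (induction n)
      case 0 then show ?case using E by (simp add: fun_eq_iff)
    next
      case (Suc n)
      have e: "t / 2^Suc n + t / 2^Suc n = t / 2^n" by (simp add: field_simps)
      show ?case
        by (rule halve[OF assms(1) assms(3) assms(4)]) (use t Suc e in auto)
    qed
    have cont: "\<And>a b. ((\<lambda>x. P x a b) \<longlongrightarrow> P 0 a b) (at_right 0)"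
    proof -
      fix a b
      obtain Q where "\<forall>i j. ((\<lambda>t. P t i j) has_real_derivative Q i j) (at_right 0)"
        using assms(2) unfolding stable_conservative_Q_def by blast
      then have "continuous (at_right 0) (\<lambda>t. P t a b)" using DERIV_continuous by blast
      then show "((\<lambda>x. P x a b) \<longlongrightarrow> P 0 a b) (at_right 0)"
        by (simp add: continuous_within)
    qed
    show False
    proof (cases "t = 0")
      case True
      have "P t i i = P t j i" using E by (simp add: fun_eq_iff)
      then show ?thesis using True P0 ij by simp
    next
      case False
      then have tp: "t > 0" using t by simp
      have lim: "filterlim (\<lambda>n. t / 2^n) (at_right (0::real)) sequentially"
      proof (rule filterlim_at_withinI)
        show "((\<lambda>n. t / 2 ^ n) \<longlongrightarrow> 0) sequentially"
          by (rule LIMSEQ_divide_realpow_zero) simp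
        show "\<forall>\<^sub>F n in sequentially. t / 2 ^ n \<in> {0<..} - {0}" using tp by (intro always_eventually) simp
      qed
      have l1: "(\<lambda>n. P (t/2^n) i i) \<longlonglongrightarrow> 1"
        using filterlim_compose[OF cont[of i i] lim] P0 by simp
      have l2: "(\<lambda>n. P (t/2^n) i i) \<longlonglongrightarrow> 0"
        using filterlim_compose[OF cont[of j i] lim] P0 ij all by simp
      from LIMSEQ_unique[OF l1 l2] show False by simp
    qed
  qed
qed

end
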